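(* Let $G$ be a regular bipartite Tanner graph with girth $g$ and smallest left (variable-node) degree $d$. Then the minimum pseudocodeword weights of $G$ on the BSC and on the AWGN channel, $w^{BSC}_{\min}$ and $w^{AWGN}_{\min}$, each satisfy \[ w_{\min} \ge \begin{cases} 1+d+d(d-1)+\cdots+d(d-1)^{\frac{g-6}{4}}, & \frac{g}{2}\text{ odd},\\ 1+d+d(d-1)+\cdots+d(d-1)^{\frac{g-8}{4}}+(d-1)^{\frac{g-4}{4}}, & \frac{g}{2}\text{ even}.\end{cases}\]
   Context: A Tanner graph $G$ is a finite bipartite graph with variable (left) nodes $v_1,\dots,v_n$ and check (right) nodes $u_1,\dots,u_m$; it defines the binary code $\mathcal{C}$ of all $x\in\{0,1\}^n$ such that every check node has an even number of neighbours $v_i$ with $x_i=1$. A degree-$\ell$ lift (cover) $\hat G$ of $G$ replaces each node $x$ of $G$ by a cloud of $\ell$ copies, and for each edge $(x,y)$ of $G$ places $\ell$ edges between the clouds of $x$ and $y$ forming a perfect matching; $\hat G$ is again a Tanner graph. A (lift-realizable) pseudocodeword of $G$ is a vector $p=(p_1,\dots,p_n)$ of nonnegative integers obtained from a codeword of the code of some finite-degree lift $\hat G$ by letting $p_i$ be the number of copies of $v_i$ assigned value 1. For a nonzero pseudocodeword $p$, let $e$ be the smallest number such that the sum of the $e$ largest $p_i$ is at least $\frac12\sum_i p_i$; then $w^{BSC}(p)=2e$ if this sum equals $\frac12\sum_ip_i$ and $w^{BSC}(p)=2e-1$ if it is strictly larger; and $w^{AWGN}(p)=(\sum_i p_i)^2/\sum_i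 p_i^2$. $w^{BSC}_{\min}$ (resp. $w^{AWGN}_{\min}$) is the minimum of $w^{BSC}(p)$ (resp. $w^{AWGN}(p)$) over all nonzero lift-realizable pseudocodewords $p$ of $G$. *)

theory Defs
  imports Complex_Main
begin

text \<open>A Tanner graph is given by n variable nodes 0..n-1, m check nodes 0..m-1 and an
edge set E (pairs (variable, check)).\<close>

definition tanner_graph :: "nat \<Rightarrow> nat \<Rightarrow> (nat \<times> nat) set \<Rightarrow> bool" where
  "tanner_graph n m E \<longleftrightarrow> E \<subseteq> {..<n} \<times> {..<m}"

definition vdeg :: "(nat \<times> nat) set \<Rightarrow> nat \<Rightarrow> nat" where
  "vdeg E i = card {j. (i, j) \<in> E}"

definition cdeg :: "(nat \<times> nat) set \<Rightarrow> nat \<Rightarrow> nat" where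
  "cdeg E j = card {i. (i, j) \<in> E}"

text \<open>A cycle of length 2t: v_0 c_0 v_1 c_1 ... v_{t-1} c_{t-1} v_0, all nodes distinct.\<close>
definition has_cycle :: "nat \<Rightarrow> nat \<Rightarrow> (nat \<times> nat) set \<Rightarrow> nat \<Rightarrow> bool" where
  "has_cycle n m E t \<longleftrightarrow> t \<ge> 2 \<and> (\<exists>vs cs :: nat \<Rightarrow> nat.
      inj_on vs {..<t} \<and> inj_on cs {..<t} \<and>
      (\<forall>k<t. vs k < n \<and> cs k < m \<and> (vs k, cs k) \<in> E \<and> (vs ((k + 1) mod t), cs k) \<in> E))"

definition has_girth :: "nat \<Rightarrow> nat \<Rightarrow> (nat \<times> nat) set \<Rightarrow> nat \<Rightarrow> bool" where
  "has_girth n m E g \<longleftrightarrow> (\<exists>t. g = 2 * t \<and> has_cycle n m E t) \<and>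
      (\<forall>t. has_cycle n m E t \<longrightarrow> g \<le> 2 * t)"

text \<open>Codeword of the degree-l lift determined by the matchings \<pi> i j (a bijection of the
clouds {..<l} for each edge (i,j)): copy a of v_i is joined to copy (\<pi> i j a) of u_j.\<close>
definition lift_perms :: "nat \<Rightarrow> (nat \<times> nat) set \<Rightarrow> (nat \<Rightarrow> nat \<Rightarrow> nat \<Rightarrow> nat) \<Rightarrow> bool" where
  "lift_perms l E \<pi> \<longleftrightarrow> (\<forall>(i, j) \<in> E. bij_betw (\<pi> i j) {..<l} {..<l})"

definition lift_codeword :: "nat \<Rightarrow> nat \<Rightarrow> nat \<Rightarrow> (nat \<times> nat) set \<Rightarrow>
    (nat \<Rightarrow> nat \<Rightarrow> nat \<Rightarrow> nat) \<Rightarrow> (nat \<Rightarrow> nat \<Rightarrow> bool) \<Rightarrow> bool" where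
  "lift_codeword n m l E \<pi> x \<longleftrightarrow>
     (\<forall>j<m. \<forall>b<l. even (card {(i, a). (i, j) \<in> E \<and> a < l \<and> \<pi> i j a = b \<and> x i a}))"

definition pseudocodeword :: "nat \<Rightarrow> nat \<Rightarrow> (nat \<times> nat) set \<Rightarrow> (nat \<Rightarrow> nat) \<Rightarrow> bool" where
  "pseudocodeword n m E p \<longleftrightarrow> (\<exists>l \<pi> x. l \<ge> 1 \<and> lift_perms l E \<pi> \<and>
      lift_codeword n m l E \<pi> x \<and> (\<forall>i<n. p i = card {a. a < l \<and> x i a}))"

definition top_sum :: "nat \<Rightarrow> (nat \<Rightarrow> nat) \<Rightarrow> nat \<Rightarrow> nat" where
  "top_sum n p e = Max {(\<Sum>i\<in>I. p i) | I. I \<subseteq> {..<n} \<and> card I = e}"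

definition w_bsc :: "nat \<Rightarrow> (nat \<Rightarrow> nat) \<Rightarrow> real" where
  "w_bsc n p = (let S = (\<Sum>i<n. p i);
                    e = (LEAST e. 2 * top_sum n p e \<ge> S)
                in if 2 * top_sum n p e = S then real (2 * e) else real (2 * e) - 1)"

definition w_awgn :: "nat \<Rightarrow> (nat \<Rightarrow> nat) \<Rightarrow> real" where
  "w_awgn n p = (real (\<Sum>i<n. p i))^2 / real (\<Sum>i<n. (p i)^2)"

definition girth_bound :: "nat \<Rightarrow> nat \<Rightarrow> real" where
  "girth_bound d g =
    (if odd (g div 2)
     then 1 + (\<Sum>k=0..(g - 6) div 4. real d * (real d - 1) ^ k)
     else 1 + (\<Sum>k\<in>{0..<(g - 4) div 4}. real d * (real d - 1) ^ k) + (real d - 1) ^ ((g - 4) div 4))"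

end

theory Submission
  imports Defs
begin


definition adjE :: "(nat \<times> nat) set \<Rightarrow> nat + nat \<Rightarrow> nat + nat \<Rightarrow> bool" where
  "adjE E x y \<longleftrightarrow> (\<exists>i j. x = Inl i \<and> y = Inr j \<and> (i, j) \<in> E) \<or> (\<exists>i j. x = Inr j \<and> y = Inl i \<and> (i, j) \<in> E)"

lemma adjE_sym: "adjE E x y \<Longrightarrow> adjE E y x"
  unfolding adjE_def by blast

lemma adjE_isl: "adjE E x y \<Longrightarrow> isl y = (\<not> isl x)"
  unfolding adjE_def by auto

lemma adjE_LR: "adjE E (Inl a) (Inr b) \<Longrightarrow> (a, b) \<in> E"
  unfolding adjE_def by auto

lemma adjE_RL: "adjE E (Inr b) (Inl a) \<Longrightarrow> (a, b) \<in> E"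
  unfolding adjE_def by auto

definition cwalk :: "(nat \<times> nat) set \<Rightarrow> (nat \<Rightarrow> nat + nat) \<Rightarrow> nat \<Rightarrow> bool" where
  "cwalk E w l \<longleftrightarrow> (\<forall>j<l. adjE E (w j) (w (Suc j))) \<and> (\<forall>j. 0 < j \<and> j < l \<longrightarrow> w (j - 1) \<noteq> w (Suc j))"

lemma mod_window:
  fixes a b s l :: nat
  assumes "s \<le> a" "a < s + l" "s \<le> b" "b < s + l" "a mod l = b mod l"
  shows "a = b"
proof (rule ccontr)
  assume ne: "a \<noteq> b"
  { fix x y :: nat assume "x < y" "s \<le> x" "y < s + l" "x mod l = y mod l"
    then have "l dvd y - x" using mod_eq_dvd_iff_nat[of x y l] by simp
    moreover have "0 < y - x" "y - x < l" using \<open>x < y\<close> \<open>s \<le> x\<close> \<open>y < s + l\<close> by auto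
    ultimately have False using nat_dvd_not_less by blast }
  then show False using ne assms by (metis linorder_neqE_nat)
qed

lemma simple_cycle:
  assumes E: "E \<subseteq> {..<n} \<times> {..<m}" and cw: "cwalk E w l" and cl: "w 0 = w l" and l1: "1 \<le> l"
    and inj: "inj_on w {..<l}"
  shows "has_cycle n m E (l div 2) \<and> 2 * (l div 2) \<le> l"
proof -
  have adj: "\<And>j. j < l \<Longrightarrow> adjE E (w j) (w (Suc j))" using cw unfolding cwalk_def by auto
  have nb: "\<And>j. 0 < j \<Longrightarrow> j < l \<Longrightarrow> w (j - 1) \<noteq> w (Suc j)" using cw unfolding cwalk_def by auto
  have par: "j \<le> l \<Longrightarrow> isl (w j) = (isl (w 0) = even j)" for j
  proof (induction j)
    case 0 then show ?case by simp
  next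
    case (Suc j)
    have "isl (w (Suc j)) = (\<not> isl (w j))" using adj[of j] Suc.prems adjE_isl by simp
    then show ?case using Suc.IH Suc.prems by auto
  qed
  have "even l" using par[of l] cl by auto
  have "l \<noteq> 2" using nb[of 1] cl by (auto simp: numeral_2_eq_2)
  with \<open>even l\<close> l1 have l4: "l \<ge> 4" by presburger
  define t where "t = l div 2"
  have lt: "l = 2 * t" using \<open>even l\<close> t_def by auto
  have t2: "t \<ge> 2" using l4 lt by auto
  define f where "f k = w (k mod l)" for k
  have fpar: "isl (f k) = (isl (w 0) = even k)" for k
  proof -
    have "k mod l \<le> l" using l4 by simp
    moreover have "even (k mod l) = even k" using dvd_mod_iff[of 2 l k] \<open>even l\<close> by simp
    ultimately show ?thesis using par[of "k mod l"] unfolding f_def by simp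
  qed
  have fadj: "adjE E (f k) (f (Suc k))" for k
  proof (cases "Suc (k mod l) = l")
    case True
    then have "Suc k mod l = 0" by (simp add: mod_Suc)
    then show ?thesis using adj[of "k mod l"] True cl unfolding f_def by simp
  next
    case False
    then have "Suc k mod l = Suc (k mod l)" by (simp add: mod_Suc)
    moreover have "k mod l < l" using l4 by simp
    ultimately show ?thesis using adj[of "k mod l"] unfolding f_def by simp
  qed
  define s where "s = (if isl (w 0) then 0 else 1::nat)"
  have s1: "s \<le> 1" unfolding s_def by simp
  have isv: "isl (f (s + 2 * k))" for k using fpar[of "s + 2*k"] unfolding s_def by auto
  have isc: "\<not> isl (f (s + 2 * k + 1))" for k using fpar[of "s + 2*k+1"] unfolding s_def by auto
  define vs where "vs k = projl (f (s + 2 * k))" for k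
  define cs where "cs k = projr (f (s + 2 * k + 1))" for k
  have fv: "f (s + 2 * k) = Inl (vs k)" for k using isv[of k] unfolding vs_def by simp
  have fc: "f (s + 2 * k + 1) = Inr (cs k)" for k using isc[of k] unfolding cs_def by (cases "f (s + 2 * k + 1)") auto
  have finj: "f a = f b \<Longrightarrow> s \<le> a \<Longrightarrow> a < s + l \<Longrightarrow> s \<le> b \<Longrightarrow> b < s + l \<Longrightarrow> a = b" for a b
  proof -
    assume "f a = f b" "s \<le> a" "a < s + l" "s \<le> b" "b < s + l"
    then have "w (a mod l) = w (b mod l)" by (simp add: f_def)
    moreover have "a mod l \<in> {..<l}" "b mod l \<in> {..<l}" using l4 by auto
    ultimately have "a mod l = b mod l" using inj_onD[OF inj] by blast
    then show "a = b" using mod_window \<open>s \<le> a\<close> \<open>a < s + l\<close> \<open>s \<le> b\<close> \<open>b < s + l\<close> by blast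
  qed
  have e1: "(vs k, cs k) \<in> E" for k using fadj[of "s + 2 * k"] fv[of k] fc[of k] adjE_LR by simp
  have mod2: "f (s + 2 * ((k + 1) mod t)) = f (s + 2 * k + 2)" for k
  proof -
    have "2 * ((k + 1) mod t) = (2 * k + 2) mod l" using lt by (simp add: mult_mod_right)
    then have "(s + 2 * ((k + 1) mod t)) mod l = (s + (2 * k + 2) mod l) mod l" by simp
    also have "\<dots> = (s + (2 * k + 2)) mod l" by (rule mod_add_right_eq)
    finally have "(s + 2 * ((k + 1) mod t)) mod l = (s + 2 * k + 2) mod l" by (simp add: add.assoc)
    then show ?thesis unfolding f_def by simp
  qed
  have e2: "(vs ((k + 1) mod t), cs k) \<in> E" for k
  proof -
    have "f (s + 2 * k + 2) = Inl (vs ((k + 1) mod t))" using mod2[of k] fv[of "(k+1) mod t"] by simp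
    then show ?thesis using fadj[of "s + 2 * k + 1"] fc[of k] adjE_RL by simp
  qed
  have "has_cycle n m E t"
    unfolding has_cycle_def
  proof (rule conjI[OF t2], rule exI[of _ vs], rule exI[of _ cs], intro conjI allI impI)
    show "inj_on vs {..<t}"
    proof (rule inj_onI)
      fix a b assume "a \<in> {..<t}" "b \<in> {..<t}" "vs a = vs b"
      then have "f (s + 2 * a) = f (s + 2 * b)" using fv by simp
      then show "a = b" using finj[of "s + 2*a" "s + 2*b"] \<open>a \<in> {..<t}\<close> \<open>b \<in> {..<t}\<close> lt by auto
    qed
    show "inj_on cs {..<t}"
    proof (rule inj_onI)
      fix a b assume "a \<in> {..<t}" "b \<in> {..<t}" "cs a = cs b"
      then have "f (s + 2 * a + 1) = f (s + 2 * b + 1)" using fc by simp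
      then show "a = b" using finj[of "s + 2*a+1" "s + 2*b+1"] \<open>a \<in> {..<t}\<close> \<open>b \<in> {..<t}\<close> lt by auto
    qed
    fix k assume "k < t"
    show "vs k < n" "cs k < m" "(vs k, cs k) \<in> E" "(vs ((k + 1) mod t), cs k) \<in> E"
      using e1[of k] e2[of k] E by auto
  qed
  moreover have "2 * (l div 2) \<le> l" by simp
  ultimately show ?thesis unfolding t_def by blast
qed

lemma closed_walk_cycle:
  assumes E: "E \<subseteq> {..<n} \<times> {..<m}"
  shows "cwalk E w l \<Longrightarrow> w 0 = w l \<Longrightarrow> 1 \<le> l \<Longrightarrow> \<exists>t. has_cycle n m E t \<and> 2 * t \<le> l"
proof (induction l arbitrary: w rule: less_induct)
  case (less l)
  show ?case
  proof (cases "inj_on w {..<l}")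
    case True
    then show ?thesis using simple_cycle[OF E less.prems] by blast
  next
    case False
    then obtain i j where ij: "i < l" "j < l" "i < j" "w i = w j"
      unfolding inj_on_def by (metis lessThan_iff linorder_neqE_nat)
    define w' where "w' k = w (i + k)" for k
    have "cwalk E w' (j - i)" using less.prems(1) ij unfolding cwalk_def w'_def
      apply (intro conjI allI impI)
      subgoal by simp
      subgoal for k
      proof -
        assume a: "(\<forall>j<l. adjE E (w j) (w (Suc j))) \<and> (\<forall>j. 0 < j \<and> j < l \<longrightarrow> w (j - 1) \<noteq> w (Suc j))"
          "i < l" "j < l" "i < j" "w i = w j" "0 < k \<and> k < j - i"
        then have "w (i + k - 1) \<noteq> w (Suc (i + k))" by auto
        moreover have "i + k - 1 = i + (k - 1)" using a by auto
        ultimately show ?thesis by simp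
      qed
      done
    moreover have "w' 0 = w' (j - i)" using ij unfolding w'_def by simp
    moreover have "j - i < l" "1 \<le> j - i" using ij by auto
    ultimately obtain t where "has_cycle n m E t" "2 * t \<le> j - i"
      using less.IH[of "j - i" w'] by blast
    then show ?thesis using ij by (intro exI[of _ t]) auto
  qed
qed



lemma cwalk_mono: "cwalk E w l \<Longrightarrow> l' \<le> l \<Longrightarrow> cwalk E w l'"
  unfolding cwalk_def by auto

lemma concat_walk:
  assumes c1: "cwalk E w1 (Suc a)" and c2: "cwalk E w2 (Suc b)" and st: "w1 0 = w2 0"
    and en: "w1 (Suc a) = w2 (Suc b)" and df: "w1 a \<noteq> w2 b"
  shows "\<exists>w l. 1 \<le> l \<and> l \<le> Suc a + Suc b \<and> cwalk E w l \<and> w 0 = w l"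
proof -
  define l1 where "l1 = Suc a"
  define l2 where "l2 = Suc b"
  define c where "c k = (if k \<le> l1 then w1 k else w2 (l1 + l2 - k))" for k
  have a1: "\<And>j. j < l1 \<Longrightarrow> adjE E (w1 j) (w1 (Suc j))" using c1 unfolding cwalk_def l1_def by auto
  have n1: "\<And>j. 0 < j \<Longrightarrow> j < l1 \<Longrightarrow> w1 (j - 1) \<noteq> w1 (Suc j)" using c1 unfolding cwalk_def l1_def by auto
  have a2: "\<And>j. j < l2 \<Longrightarrow> adjE E (w2 j) (w2 (Suc j))" using c2 unfolding cwalk_def l2_def by auto
  have n2: "\<And>j. 0 < j \<Longrightarrow> j < l2 \<Longrightarrow> w2 (j - 1) \<noteq> w2 (Suc j)" using c2 unfolding cwalk_def l2_def by auto
  have "cwalk E c (l1 + l2)"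
    unfolding cwalk_def
  proof (intro conjI allI impI)
    fix j assume j: "j < l1 + l2"
    show "adjE E (c j) (c (Suc j))"
    proof (cases "Suc j \<le> l1")
      case True then show ?thesis using a1[of j] unfolding c_def by simp
    next
      case False
      then have "j \<ge> l1" by simp
      define i where "i = l1 + l2 - Suc j"
      have i: "i < l2" "l1 + l2 - j = Suc i" using j False unfolding i_def by auto
      have "c j = w2 (Suc i)"
      proof (cases "j = l1")
        case True then show ?thesis using en i unfolding c_def l1_def l2_def by simp
      next
        case False then show ?thesis using \<open>j \<ge> l1\<close> i unfolding c_def by simp
      qed
      moreover have "c (Suc j) = w2 i" using False unfolding c_def i_def by simp
      ultimately show ?thesis using a2[OF i(1)] adjE_sym by simp
    qed
  next
    fix j assume j: "0 < j \<and> j < l1 + l2"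
    show "c (j - 1) \<noteq> c (Suc j)"
    proof (cases "j < l1")
      case True
      then have "c (j - 1) = w1 (j - 1)" "c (Suc j) = w1 (Suc j)" unfolding c_def by auto
      then show ?thesis using n1[of j] j True by simp
    next
      case False
      show ?thesis
      proof (cases "j = l1")
        case True
        then have "c (j - 1) = w1 a" "c (Suc j) = w2 b" unfolding c_def l1_def l2_def by auto
        then show ?thesis using df by simp
      next
        case False
        define i where "i = l1 + l2 - j"
        have i: "0 < i" "i < l2" "l1 + l2 - (j - 1) = Suc i" "l1 + l2 - Suc j = i - 1"
          using j False \<open>\<not> j < l1\<close> unfolding i_def by auto
        have "c (j - 1) = w2 (Suc i)"
        proof (cases "j - 1 = l1")
          case True
          then have "Suc i = l2" using i by simp
          then show ?thesis using True en unfolding c_def l1_def l2_def by simp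
        next
          case False
          then have "\<not> j - 1 \<le> l1" using \<open>\<not> j < l1\<close> \<open>\<not> j = l1\<close> by simp
          then have "c (j - 1) = w2 (l1 + l2 - (j - 1))" unfolding c_def by simp
          then show ?thesis using i by simp
        qed
        moreover have "c (Suc j) = w2 (i - 1)"
          using False \<open>\<not> j < l1\<close> i unfolding c_def by simp
        ultimately show ?thesis using n2[OF i(1,2)] by auto
      qed
    qed
  qed
  moreover have "c 0 = c (l1 + l2)" using st unfolding c_def l1_def l2_def by simp
  ultimately show ?thesis unfolding l1_def l2_def by (intro exI[of _ c] exI[of _ "Suc a + Suc b"]) auto
qed

lemma two_walks:
  "cwalk E w1 l1 \<Longrightarrow> cwalk E w2 l2 \<Longrightarrow> w1 0 = w2 0 \<Longrightarrow> w1 l1 = w2 l2 \<Longrightarrow>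
   l1 \<noteq> l2 \<or> (\<exists>j\<le>l1. w1 j \<noteq> w2 j) \<Longrightarrow>
   \<exists>w l. 1 \<le> l \<and> l \<le> l1 + l2 \<and> cwalk E w l \<and> w 0 = w l"
proof (induction l1 arbitrary: l2)
  case 0
  then have "l2 \<ge> 1" by auto
  then show ?case using 0 by (intro exI[of _ w2] exI[of _ l2]) auto
next
  case (Suc a)
  show ?case
  proof (cases l2)
    case 0
    then show ?thesis using Suc.prems by (intro exI[of _ w1] exI[of _ "Suc a"]) auto
  next
    case (Suc b)
    show ?thesis
    proof (cases "w1 a = w2 b")
      case True
      note eqab = this
      have d: "a \<noteq> b \<or> (\<exists>j\<le>a. w1 j \<noteq> w2 j)"
      proof (cases "Suc a = l2")
        case False then show ?thesis using Suc by auto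
      next
        case True
        then obtain j where j: "j \<le> Suc a" "w1 j \<noteq> w2 j" using Suc.prems(5) by auto
        have "j \<noteq> Suc a" using j Suc.prems(4) True by auto
        moreover have "a = b" using True \<open>l2 = Suc b\<close> by simp
        moreover have "j \<noteq> a" using j eqab \<open>a = b\<close> by auto
        ultimately have "j \<le> a" using j by auto
        then show ?thesis using j by blast
      qed
      obtain w l where "1 \<le> l" "l \<le> a + b" "cwalk E w l" "w 0 = w l"
        using Suc.IH[of b] cwalk_mono[OF Suc.prems(1), of a] cwalk_mono[OF Suc.prems(2), of b]
          Suc.prems(3) True d \<open>l2 = Suc b\<close> by fastforce
      then show ?thesis using \<open>l2 = Suc b\<close> by (intro exI[of _ w] exI[of _ l]) auto
    next
      case False
      then show ?thesis using concat_walk[of E w1 a w2 b] Suc.prems \<open>l2 = Suc b\<close> by simp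
    qed
  qed
qed



fun nbp :: "(nat \<times> nat) set \<Rightarrow> nat \<Rightarrow> nat \<Rightarrow> (nat \<times> nat) list \<Rightarrow> bool" where
  "nbp E u c [] = True"
| "nbp E u c ((c', w) # P) = ((u, c') \<in> E \<and> (w, c') \<in> E \<and> c' \<noteq> c \<and> w \<noteq> u \<and> nbp E w c' P)"

fun endv :: "nat \<Rightarrow> (nat \<times> nat) list \<Rightarrow> nat" where
  "endv u [] = u"
| "endv u ((c', w) # P) = endv w P"

fun wk :: "nat \<Rightarrow> (nat \<times> nat) list \<Rightarrow> nat \<Rightarrow> nat + nat" where
  "wk u [] j = Inl u"
| "wk u ((c', w) # P) j = (if j = 0 then Inl u else if j = 1 then Inr c' else wk w P (j - 2))"

lemma wk0: "wk u P 0 = Inl u"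
  by (cases P) auto

lemma wk_nth: "j < length P \<Longrightarrow> wk u P (2 * j + 1) = Inr (fst (P ! j)) \<and> wk u P (2 * j + 2) = Inl (snd (P ! j))"
proof (induction P arbitrary: u j)
  case Nil then show ?case by simp
next
  case (Cons q P)
  obtain c' w where q: "q = (c', w)" by (cases q)
  show ?case
  proof (cases j)
    case 0 then show ?thesis using q by (simp add: wk0)
  next
    case (Suc j')
    then have "j' < length P" using Cons.prems by simp
    then have "wk w P (2 * j' + 1) = Inr (fst (P ! j')) \<and> wk w P (2 * j' + 2) = Inl (snd (P ! j'))"
      using Cons.IH by blast
    moreover have "2 * j + 1 - 2 = 2 * j' + 1" "2 * j + 2 - 2 = 2 * j' + 2" using Suc by auto
    ultimately show ?thesis using q Suc by simp
  qed
qed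

lemma wk_end: "wk u P (2 * length P) = Inl (endv u P)"
proof (induction P arbitrary: u)
  case Nil then show ?case by simp
next
  case (Cons q P)
  obtain c' w where q: "q = (c', w)" by (cases q)
  have "2 * length (q # P) - 2 = 2 * length P" by simp
  then show ?case using q Cons.IH by simp
qed

lemma endv_last: "P \<noteq> [] \<Longrightarrow> endv u P = snd (last P)"
proof (induction P arbitrary: u)
  case Nil then show ?case by simp
next
  case (Cons q P)
  obtain c' w where q: "q = (c', w)" by (cases q)
  show ?case using q Cons by (cases P) auto
qed

lemma nbp_set: "nbp E u c P \<Longrightarrow> set P \<subseteq> {(c, w). (w, c) \<in> E}"
  by (induction E u c P rule: nbp.induct) auto

lemma nbp_end: "E \<subseteq> {..<n} \<times> {..<m} \<Longrightarrow> u < n \<Longrightarrow> nbp E u c P \<Longrightarrow> endv u P < n"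
  by (induction E u c P rule: nbp.induct) auto

lemma nbp_walk: "nbp E u c P \<Longrightarrow> cwalk E (wk u P) (2 * length P)"
proof (induction E u c P rule: nbp.induct)
  case (1 E u c) then show ?case unfolding cwalk_def by simp
next
  case (2 E u c c' w P)
  then have h: "(u, c') \<in> E" "(w, c') \<in> E" "c' \<noteq> c" "w \<noteq> u" "nbp E w c' P" by auto
  have IH: "cwalk E (wk w P) (2 * length P)" using 2 h by auto
  show ?case unfolding cwalk_def
  proof (intro conjI allI impI)
    fix j assume j: "j < 2 * length ((c', w) # P)"
    show "adjE E (wk u ((c', w) # P) j) (wk u ((c', w) # P) (Suc j))"
    proof (cases "j \<le> 1")
      case True
      then show ?thesis using h unfolding adjE_def by (cases j) (auto simp: wk0)
    next
      case False
      then have "j - 2 < 2 * length P" "Suc j - 2 = Suc (j - 2)" using j by auto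
      then show ?thesis using IH False unfolding cwalk_def by auto
    qed
  next
    fix j assume j: "0 < j \<and> j < 2 * length ((c', w) # P)"
    show "wk u ((c', w) # P) (j - 1) \<noteq> wk u ((c', w) # P) (Suc j)"
    proof (cases "j = 1")
      case True then show ?thesis using h by (simp add: wk0)
    next
      case False
      show ?thesis
      proof (cases "j = 2")
        case True
        then have "P \<noteq> []" using j by auto
        then obtain c'' w' P' where P: "P = (c'', w') # P'" by (metis list.exhaust prod.exhaust)
        then have "c'' \<noteq> c'" using h by simp
        then show ?thesis using True P by simp
      next
        case False
        then have "j \<ge> 3" using \<open>j \<noteq> 1\<close> j by auto
        then have "0 < j - 2" "j - 2 < 2 * length P" "j - 1 - 2 = j - 2 - 1" "Suc j - 2 = Suc (j - 2)" using j by auto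
        then have X: "wk w P (j - 2 - 1) \<noteq> wk w P (Suc (j - 2))" using IH unfolding cwalk_def by blast
        have Y: "wk u ((c', w) # P) (j - 1) = wk w P (j - 1 - 2)"
        proof -
          have "j - 1 \<noteq> 0" "j - 1 \<noteq> 1" using \<open>j \<ge> 3\<close> by auto
          then show ?thesis by (simp only: wk.simps if_False)
        qed
        have Z: "wk u ((c', w) # P) (Suc j) = wk w P (Suc j - 2)"
        proof -
          have "Suc j \<noteq> 0" "Suc j \<noteq> 1" using \<open>j \<ge> 3\<close> by auto
          then show ?thesis by (simp only: wk.simps if_False)
        qed
        have "j - 1 - 2 = j - 2 - 1" "Suc j - 2 = Suc (j - 2)" using \<open>j \<ge> 3\<close> by auto
        then show ?thesis using X Y Z by metis
      qed
    qed
  qed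
qed
lemma girth_walk:
  assumes E: "E \<subseteq> {..<n} \<times> {..<m}" and G: "has_girth n m E g"
    and "cwalk E w l" "w 0 = w l" "1 \<le> l"
  shows "g \<le> l"
proof -
  obtain t where "has_cycle n m E t" "2 * t \<le> l" using closed_walk_cycle[OF E assms(3-5)] by blast
  then show ?thesis using G unfolding has_girth_def by force
qed

lemma list_differ: "length P1 = length P2 \<Longrightarrow> P1 \<noteq> P2 \<Longrightarrow> \<exists>j<length P1. P1 ! j \<noteq> P2 ! j"
  using nth_equalityI by blast

lemma wk_differ:
  assumes "j < length P1" "j < length P2" "P1 ! j \<noteq> P2 ! j"
  shows "\<exists>i\<le>2 * j + 2. wk u P1 i \<noteq> wk u P2 i"
proof (cases "fst (P1 ! j) = fst (P2 ! j)")
  case True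
  then have "snd (P1 ! j) \<noteq> snd (P2 ! j)" using assms(3) by (metis prod.expand)
  then show ?thesis using wk_nth[OF assms(1), of u] wk_nth[OF assms(2), of u] by (intro exI[of _ "2*j+2"]) auto
next
  case False
  then show ?thesis using wk_nth[OF assms(1), of u] wk_nth[OF assms(2), of u] by (intro exI[of _ "2*j+1"]) auto
qed

lemma path_close:
  assumes E: "E \<subseteq> {..<n} \<times> {..<m}" and G: "has_girth n m E g"
    and p1: "nbp E u c P1" and p2: "nbp E u c P2" and ne: "P1 \<noteq> P2" and en: "endv u P1 = endv u P2"
  shows "g \<le> 2 * length P1 + 2 * length P2"
proof -
  have d: "2 * length P1 \<noteq> 2 * length P2 \<or> (\<exists>i\<le>2 * length P1. wk u P1 i \<noteq> wk u P2 i)"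
  proof (cases "length P1 = length P2")
    case True
    then obtain j where j: "j < length P1" "P1 ! j \<noteq> P2 ! j" using list_differ ne by blast
    then obtain i where "i \<le> 2 * j + 2" "wk u P1 i \<noteq> wk u P2 i" using wk_differ[of j P1 P2 u] True by auto
    then show ?thesis using j by (intro disjI2 exI[of _ i]) auto
  qed simp
  obtain w l where "1 \<le> l" "l \<le> 2 * length P1 + 2 * length P2" "cwalk E w l" "w 0 = w l"
    using two_walks[OF nbp_walk[OF p1] nbp_walk[OF p2] _ _ d] by (auto simp: wk0 wk_end en)
  then have "g \<le> l" using girth_walk[OF E G] by blast
  then show ?thesis using \<open>l \<le> 2 * length P1 + 2 * length P2\<close> by linarith
qed

lemma path_close2:
  assumes E: "E \<subseteq> {..<n} \<times> {..<m}" and G: "has_girth n m E g"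
    and p1: "nbp E u c P1" and p2: "nbp E u c P2" and ne: "P1 \<noteq> P2" and le: "length P1 = length P2"
    and la: "last P1 = last P2" and nn: "P1 \<noteq> []"
  shows "g \<le> 4 * length P1 - 2"
proof -
  define L where "L = 2 * length P1 - 1"
  obtain j where j: "j < length P1" "P1 ! j \<noteq> P2 ! j" using list_differ ne le by blast
  have "j \<noteq> length P1 - 1" using j la nn le by (metis last_conv_nth length_0_conv)
  then have jl: "2 * j + 2 \<le> L" using j unfolding L_def by auto
  obtain i where i: "i \<le> 2 * j + 2" "wk u P1 i \<noteq> wk u P2 i" using wk_differ[of j P1 P2 u] j le by auto
  have "i \<le> L" using i(1) jl by linarith
  then have d: "L \<noteq> L \<or> (\<exists>i\<le>L. wk u P1 i \<noteq> wk u P2 i)" using i(2) by blast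
  have c1: "cwalk E (wk u P1) L" using cwalk_mono[OF nbp_walk[OF p1]] unfolding L_def by simp
  have c2: "cwalk E (wk u P2) L" using cwalk_mono[OF nbp_walk[OF p2]] le unfolding L_def by simp
  have L1: "L = 2 * (length P1 - 1) + 1" using nn unfolding L_def by (cases P1) auto
  have nn2: "P2 \<noteq> []" using nn le by auto
  have "wk u P1 L = Inr (fst (P1 ! (length P1 - 1)))" using wk_nth[of "length P1 - 1" P1 u] nn L1 by simp
  moreover have "wk u P2 L = Inr (fst (P2 ! (length P1 - 1)))" using wk_nth[of "length P1 - 1" P2 u] nn2 L1 le by simp
  moreover have "P1 ! (length P1 - 1) = P2 ! (length P1 - 1)" using la nn le by (metis last_conv_nth length_0_conv)
  ultimately have en: "wk u P1 L = wk u P2 L" by simp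
  obtain w l where "1 \<le> l" "l \<le> L + L" "cwalk E w l" "w 0 = w l"
    using two_walks[OF c1 c2 _ en d] by (auto simp: wk0)
  then have "g \<le> l" using girth_walk[OF E G] by blast
  then have "g \<le> L + L" using \<open>l \<le> L + L\<close> by linarith
  moreover have "L + L = 4 * length P1 - 2" unfolding L_def using nn by (cases P1) auto
  ultimately show ?thesis by simp
qed



lemma local_ineq:
  assumes E: "E \<subseteq> {..<n} \<times> {..<m}" and pc: "pseudocodeword n m E p" and ij: "(i, j) \<in> E"
  shows "p i \<le> (\<Sum>i'\<in>{i'. (i', j) \<in> E \<and> i' \<noteq> i}. p i')"
proof -
  obtain l \<pi> x where l: "l \<ge> 1" and perm: "lift_perms l E \<pi>" and cw: "lift_codeword n m l E \<pi> x"
    and pv: "\<forall>i<n. p i = card {a. a < l \<and> x i a}"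
    using pc unfolding pseudocodeword_def by blast
  have bij: "\<And>i j. (i, j) \<in> E \<Longrightarrow> bij_betw (\<pi> i j) {..<l} {..<l}" using perm unfolding lift_perms_def by auto
  have jm: "j < m" and "i < n" using ij E by auto
  define N where "N = {i'. (i', j) \<in> E \<and> i' \<noteq> i}"
  define A where "A = {a. a < l \<and> x i a}"
  define B where "B = Sigma N (\<lambda>i'. {a. a < l \<and> x i' a})"
  have Nn: "N \<subseteq> {..<n}" using E unfolding N_def by auto
  have finN: "finite N" using Nn finite_subset by blast
  have finB: "finite B" unfolding B_def using finN by auto
  have ex: "\<exists>q\<in>B. \<pi> (fst q) j (snd q) = \<pi> i j a" if a: "a \<in> A" for a
  proof -
    define b where "b = \<pi> i j a"
    have al: "a < l" using a unfolding A_def by simp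
    have bl: "b < l" using bij[OF ij] al unfolding b_def bij_betw_def by auto
    define C where "C = {(i', a'). (i', j) \<in> E \<and> a' < l \<and> \<pi> i' j a' = b \<and> x i' a'}"
    have ev: "even (card C)" using cw jm bl unfolding lift_codeword_def C_def by blast
    have finC: "finite C"
    proof (rule finite_subset)
      show "C \<subseteq> {..<n} \<times> {..<l}" using E unfolding C_def by auto
    qed auto
    have iaC: "(i, a) \<in> C" using a ij unfolding C_def A_def b_def by auto
    then have "card C \<noteq> 0" using finC by auto
    with ev have "card C \<ge> 2" by presburger
    then have "card (C - {(i, a)}) \<ge> 1" using iaC finC by simp
    then have "C - {(i, a)} \<noteq> {}" by (metis card.empty not_one_le_zero)
    then obtain q where "q \<in> C - {(i, a)}" by blast
    then obtain i' a' where q: "(i', a') \<in> C" "(i', a') \<noteq> (i, a)" by (cases q) auto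
    have hq: "(i', j) \<in> E" "a' < l" "\<pi> i' j a' = b" "x i' a'" using q(1) unfolding C_def by auto
    have "i' \<noteq> i"
    proof
      assume "i' = i"
      then have "\<pi> i j a' = \<pi> i j a" using hq unfolding b_def by simp
      then have "a' = a" using bij[OF ij] al hq(2) unfolding bij_betw_def inj_on_def by auto
      then show False using q(2) \<open>i' = i\<close> by simp
    qed
    then have "(i', a') \<in> B" using hq unfolding B_def N_def by auto
    moreover have "\<pi> (fst (i', a')) j (snd (i', a')) = \<pi> i j a" using hq(3) unfolding b_def by simp
    ultimately show ?thesis by blast
  qed
  define \<phi> where "\<phi> a = (SOME q. q \<in> B \<and> \<pi> (fst q) j (snd q) = \<pi> i j a)" for a
  have \<phi>: "\<phi> a \<in> B \<and> \<pi> (fst (\<phi> a)) j (snd (\<phi> a)) = \<pi> i j a" if "a \<in> A" for a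
    unfolding \<phi>_def using someI_ex[OF ex[OF that, unfolded Bex_def]] by blast
  have "inj_on \<phi> A"
  proof (rule inj_onI)
    fix a1 a2 assume a: "a1 \<in> A" "a2 \<in> A" "\<phi> a1 = \<phi> a2"
    then have "\<pi> i j a1 = \<pi> i j a2" using \<phi>[OF a(1)] \<phi>[OF a(2)] by metis
    then show "a1 = a2" using bij[OF ij] a(1,2) unfolding bij_betw_def inj_on_def A_def by auto
  qed
  moreover have "\<phi> ` A \<subseteq> B" using \<phi> by auto
  ultimately have "card A \<le> card B" using card_inj_on_le finB by blast
  also have "card B = (\<Sum>i'\<in>N. card {a. a < l \<and> x i' a})" unfolding B_def using finN by (simp add: card_SigmaI)
  also have "\<dots> = (\<Sum>i'\<in>N. p i')" using pv Nn by (intro sum.cong) auto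
  finally show ?thesis using pv \<open>i < n\<close> unfolding A_def N_def by simp
qed



definition pset :: "(nat \<times> nat) set \<Rightarrow> nat \<Rightarrow> nat \<Rightarrow> nat \<Rightarrow> (nat \<times> nat) list set" where
  "pset E k u c = {P. length P = k \<and> nbp E u c P}"

definition Fs :: "(nat \<times> nat) set \<Rightarrow> (nat \<Rightarrow> nat) \<Rightarrow> nat \<Rightarrow> nat \<Rightarrow> nat \<Rightarrow> nat" where
  "Fs E p k u c = (\<Sum>P\<in>pset E k u c. p (endv u P))"

definition Dset :: "(nat \<times> nat) set \<Rightarrow> nat \<Rightarrow> nat \<Rightarrow> (nat \<times> nat) set" where
  "Dset E u c = (SIGMA c':{c'. (u, c') \<in> E \<and> c' \<noteq> c}. {w. (w, c') \<in> E \<and> w \<noteq> u})"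

lemma finite_pset: "finite E \<Longrightarrow> finite (pset E k u c)"
proof -
  assume fE: "finite E"
  define S where "S = (\<lambda>(i, j). (j, i)) ` E"
  have "finite S" using fE unfolding S_def by simp
  then have "finite {xs. set xs \<subseteq> S \<and> length xs = k}" by (rule finite_lists_length_eq)
  moreover have "pset E k u c \<subseteq> {xs. set xs \<subseteq> S \<and> length xs = k}"
  proof
    fix P assume "P \<in> pset E k u c"
    then have "length P = k" "nbp E u c P" unfolding pset_def by auto
    then have "set P \<subseteq> {(c, w). (w, c) \<in> E}" using nbp_set by blast
    moreover have "{(c, w). (w, c) \<in> E} \<subseteq> S" unfolding S_def by auto
    ultimately show "P \<in> {xs. set xs \<subseteq> S \<and> length xs = k}" using \<open>length P = k\<close> by auto
  qed
  ultimately show ?thesis using finite_subset by blast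
qed

lemma finite_Dset: "finite E \<Longrightarrow> finite (Dset E u c)"
proof -
  assume fE: "finite E"
  have "Dset E u c \<subseteq> (\<lambda>(i, j). (j, i)) ` E" unfolding Dset_def by auto
  then show ?thesis using fE finite_subset by blast
qed

lemma pset_0: "pset E 0 u c = {[]}"
  unfolding pset_def by auto

lemma Fs_0: "Fs E p 0 u c = p u"
  unfolding Fs_def pset_0 by simp

lemma pset_Suc: "pset E (Suc k) u c = (\<lambda>(q, P). q # P) ` (SIGMA q:Dset E u c. pset E k (snd q) (fst q))"
proof (rule set_eqI)
  fix P
  show "P \<in> pset E (Suc k) u c \<longleftrightarrow> P \<in> (\<lambda>(q, P). q # P) ` (SIGMA q:Dset E u c. pset E k (snd q) (fst q))"
  proof
    assume a: "P \<in> pset E (Suc k) u c"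
    then obtain q P' where P: "P = q # P'" unfolding pset_def by (cases P) auto
    obtain c' w where q: "q = (c', w)" by (cases q)
    have "length P' = k" "nbp E u c ((c', w) # P')" using a P q unfolding pset_def by auto
    then have "((c', w), P') \<in> (SIGMA q:Dset E u c. pset E k (snd q) (fst q))"
      unfolding Dset_def pset_def by auto
    then show "P \<in> (\<lambda>(q, P). q # P) ` (SIGMA q:Dset E u c. pset E k (snd q) (fst q))"
      using P q by (intro image_eqI[of _ _ "((c', w), P')"]) auto
  next
    assume "P \<in> (\<lambda>(q, P). q # P) ` (SIGMA q:Dset E u c. pset E k (snd q) (fst q))"
    then obtain c' w P' where P: "P = (c', w) # P'" and h: "(c', w) \<in> Dset E u c" "P' \<in> pset E k w c'"
      by auto
    then show "P \<in> pset E (Suc k) u c" unfolding pset_def Dset_def by auto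
  qed
qed

lemma Fs_Suc:
  assumes fE: "finite E"
  shows "Fs E p (Suc k) u c = (\<Sum>q\<in>Dset E u c. Fs E p k (snd q) (fst q))"
proof -
  have inj: "inj_on (\<lambda>(q, P). q # P) (SIGMA q:Dset E u c. pset E k (snd q) (fst q))"
    by (auto simp: inj_on_def)
  have "Fs E p (Suc k) u c = (\<Sum>x\<in>(SIGMA q:Dset E u c. pset E k (snd q) (fst q)). p (endv u ((\<lambda>(q, P). q # P) x)))"
    unfolding Fs_def pset_Suc using sum.reindex[OF inj] by simp
  also have "\<dots> = (\<Sum>x\<in>(SIGMA q:Dset E u c. pset E k (snd q) (fst q)). p (endv (snd (fst x)) (snd x)))"
    by (intro sum.cong) auto
  also have "\<dots> = (\<Sum>q\<in>Dset E u c. \<Sum>P\<in>pset E k (snd q) (fst q). p (endv (snd q) P))"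
    using sum.Sigma[OF finite_Dset[OF fE], where B="\<lambda>q. pset E k (snd q) (fst q)" and g="\<lambda>q P. p (endv (snd q) P)"]
      finite_pset[OF fE] by (simp add: case_prod_beta)
  finally show ?thesis unfolding Fs_def .
qed

lemma Dsum:
  assumes fE: "finite E"
  shows "(\<Sum>q\<in>Dset E u c. h q) = (\<Sum>c'\<in>{c'. (u, c') \<in> E \<and> c' \<noteq> c}. \<Sum>w\<in>{w. (w, c') \<in> E \<and> w \<noteq> u}. h (c', w))"
proof -
  have f1: "finite {c'. (u, c') \<in> E \<and> c' \<noteq> c}"
  proof -
    have "{c'. (u, c') \<in> E \<and> c' \<noteq> c} \<subseteq> snd ` E" by force
    then show ?thesis using fE finite_subset by blast
  qed
  have f2: "finite {w. (w, c') \<in> E \<and> w \<noteq> u}" for c'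
  proof -
    have "{w. (w, c') \<in> E \<and> w \<noteq> u} \<subseteq> fst ` E" by force
    then show ?thesis using fE finite_subset by blast
  qed
  show ?thesis unfolding Dset_def using sum.Sigma[OF f1, where B="\<lambda>c'. {w. (w, c') \<in> E \<and> w \<noteq> u}" and g="\<lambda>c' w. h (c', w)"] f2
    by (simp add: case_prod_beta)
qed

lemma Fs_step:
  assumes E: "E \<subseteq> {..<n} \<times> {..<m}" and pc: "pseudocodeword n m E p"
    and IH: "\<And>w c'. w < n \<Longrightarrow> (w, c') \<in> E \<Longrightarrow> (d - 1) ^ k * p w \<le> Fs E p k w c'"
  shows "card {c'. (u, c') \<in> E \<and> c' \<noteq> c} * ((d - 1) ^ k * p u) \<le> Fs E p (Suc k) u c"
proof -
  have fE: "finite E" using E finite_subset by blast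
  define C where "C = {c'. (u, c') \<in> E \<and> c' \<noteq> c}"
  have "card C * ((d - 1) ^ k * p u) = (\<Sum>c'\<in>C. (d - 1) ^ k * p u)" by simp
  also have "\<dots> \<le> (\<Sum>c'\<in>C. (d - 1) ^ k * (\<Sum>w\<in>{w. (w, c') \<in> E \<and> w \<noteq> u}. p w))"
  proof (rule sum_mono)
    fix c' assume "c' \<in> C"
    then have "(u, c') \<in> E" unfolding C_def by simp
    then have "p u \<le> (\<Sum>w\<in>{w. (w, c') \<in> E \<and> w \<noteq> u}. p w)" using local_ineq[OF E pc] by blast
    then show "(d - 1) ^ k * p u \<le> (d - 1) ^ k * (\<Sum>w\<in>{w. (w, c') \<in> E \<and> w \<noteq> u}. p w)" by simp
  qed
  also have "\<dots> = (\<Sum>c'\<in>C. \<Sum>w\<in>{w. (w, c') \<in> E \<and> w \<noteq> u}. (d - 1) ^ k * p w)"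
    by (simp add: sum_distrib_left)
  also have "\<dots> \<le> (\<Sum>c'\<in>C. \<Sum>w\<in>{w. (w, c') \<in> E \<and> w \<noteq> u}. Fs E p k w c')"
  proof (intro sum_mono)
    fix c' w assume "w \<in> {w. (w, c') \<in> E \<and> w \<noteq> u}"
    then have "(w, c') \<in> E" "w < n" using E by auto
    then show "(d - 1) ^ k * p w \<le> Fs E p k w c'" using IH by blast
  qed
  also have "\<dots> = Fs E p (Suc k) u c" unfolding C_def using Fs_Suc[OF fE] Dsum[OF fE, of "\<lambda>q. Fs E p k (snd q) (fst q)" u c] by simp
  finally show ?thesis unfolding C_def .
qed

lemma card_nbrs:
  assumes E: "E \<subseteq> {..<n} \<times> {..<m}" and deg: "\<forall>i<n. vdeg E i = d" and u: "u < n"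
  shows "(u, c) \<in> E \<Longrightarrow> card {c'. (u, c') \<in> E \<and> c' \<noteq> c} = d - 1"
    and "(u, c) \<notin> E \<Longrightarrow> card {c'. (u, c') \<in> E \<and> c' \<noteq> c} = d"
proof -
  have fin: "finite {c'. (u, c') \<in> E}"
  proof -
    have "{c'. (u, c') \<in> E} \<subseteq> {..<m}" using E by auto
    then show ?thesis using finite_subset by blast
  qed
  have dd: "card {c'. (u, c') \<in> E} = d" using deg u unfolding vdeg_def by simp
  have eq: "{c'. (u, c') \<in> E \<and> c' \<noteq> c} = {c'. (u, c') \<in> E} - {c}" by auto
  show "(u, c) \<in> E \<Longrightarrow> card {c'. (u, c') \<in> E \<and> c' \<noteq> c} = d - 1"
    unfolding eq using card_Diff_singleton[of c "{c'. (u, c') \<in> E}"] dd by simp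
  show "(u, c) \<notin> E \<Longrightarrow> card {c'. (u, c') \<in> E \<and> c' \<noteq> c} = d"
    using dd by (metis (no_types, lifting) eq Diff_empty Diff_insert0 mem_Collect_eq)
qed

lemma Fs_bound:
  assumes E: "E \<subseteq> {..<n} \<times> {..<m}" and pc: "pseudocodeword n m E p" and deg: "\<forall>i<n. vdeg E i = d"
  shows "u < n \<Longrightarrow> (u, c) \<in> E \<Longrightarrow> (d - 1) ^ k * p u \<le> Fs E p k u c"
proof (induction k arbitrary: u c)
  case 0 then show ?case by (simp add: Fs_0)
next
  case (Suc k)
  have "card {c'. (u, c') \<in> E \<and> c' \<noteq> c} * ((d - 1) ^ k * p u) \<le> Fs E p (Suc k) u c"
    using Fs_step[OF E pc, of d k u c] Suc.IH by blast
  then show ?case using card_nbrs(1)[OF E deg Suc.prems] by (simp add: mult.assoc)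
qed

lemma Fs_root:
  assumes E: "E \<subseteq> {..<n} \<times> {..<m}" and pc: "pseudocodeword n m E p" and deg: "\<forall>i<n. vdeg E i = d"
    and u: "u < n"
  shows "d * ((d - 1) ^ k * p u) \<le> Fs E p (Suc k) u m"
proof -
  have "(u, m) \<notin> E" using E by auto
  then show ?thesis using Fs_step[OF E pc, of d k u m] Fs_bound[OF E pc deg] card_nbrs(2)[OF E deg u] by simp
qed



definition Bn :: "nat \<Rightarrow> nat \<Rightarrow> nat" where
  "Bn d g =
    (if odd (g div 2)
     then 1 + (\<Sum>k=0..(g - 6) div 4. d * (d - 1) ^ k)
     else 1 + (\<Sum>k\<in>{0..<(g - 4) div 4}. d * (d - 1) ^ k) + (d - 1) ^ ((g - 4) div 4))"

lemma sum_levels: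
  assumes fE: "finite E"
  shows "(\<Sum>k<L. Fs E p k u c) = (\<Sum>P\<in>{P. length P < L \<and> nbp E u c P}. p (endv u P))"
proof -
  have eq: "{P. length P < L \<and> nbp E u c P} = (\<Union>k\<in>{..<L}. pset E k u c)" unfolding pset_def by auto
  have "(\<Sum>P\<in>(\<Union>k\<in>{..<L}. pset E k u c). p (endv u P)) = (\<Sum>k<L. \<Sum>P\<in>pset E k u c. p (endv u P))"
    by (rule sum.UNION_disjoint) (auto simp: finite_pset[OF fE, unfolded pset_def] pset_def)
  then show ?thesis unfolding eq Fs_def by simp
qed

lemma finite_U: "finite E \<Longrightarrow> finite {P. length P < L \<and> nbp E u c P}"
proof -
  assume fE: "finite E"
  have "{P. length P < L \<and> nbp E u c P} = (\<Union>k\<in>{..<L}. pset E k u c)" unfolding pset_def by auto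
  then show ?thesis using finite_pset[OF fE] by simp
qed

lemma level_le_S:
  assumes E: "E \<subseteq> {..<n} \<times> {..<m}" and u: "u < n"
    and inj: "inj_on (endv u) {P. length P < L \<and> nbp E u c P}"
  shows "(\<Sum>k<L. Fs E p k u c) = (\<Sum>i\<in>endv u ` {P. length P < L \<and> nbp E u c P}. p i)"
    and "endv u ` {P. length P < L \<and> nbp E u c P} \<subseteq> {..<n}"
proof -
  have fE: "finite E" using E finite_subset by blast
  show "(\<Sum>k<L. Fs E p k u c) = (\<Sum>i\<in>endv u ` {P. length P < L \<and> nbp E u c P}. p i)"
    unfolding sum_levels[OF fE] using sum.reindex[OF inj, of p] by simp
  show "endv u ` {P. length P < L \<and> nbp E u c P} \<subseteq> {..<n}" using nbp_end[OF E u] by auto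
qed

lemma lower_levels:
  assumes E: "E \<subseteq> {..<n} \<times> {..<m}" and pc: "pseudocodeword n m E p" and deg: "\<forall>i<n. vdeg E i = d"
    and u: "u < n"
  shows "p u + (\<Sum>k<K. d * (d - 1) ^ k) * p u \<le> (\<Sum>k<Suc K. Fs E p k u m)"
proof -
  have "(\<Sum>k<Suc K. Fs E p k u m) = Fs E p 0 u m + (\<Sum>k<K. Fs E p (Suc k) u m)"
    by (rule sum.lessThan_Suc_shift)
  moreover have "(\<Sum>k<K. d * (d - 1) ^ k) * p u \<le> (\<Sum>k<K. Fs E p (Suc k) u m)"
    unfolding sum_distrib_right
    using Fs_root[OF E pc deg u] by (intro sum_mono) (simp add: mult.assoc)
  ultimately show ?thesis by (simp add: Fs_0)
qed

lemma key_bound: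
  assumes E: "E \<subseteq> {..<n} \<times> {..<m}" and G: "has_girth n m E g" and pc: "pseudocodeword n m E p"
    and deg: "\<forall>i<n. vdeg E i = d" and u: "v0 < n" and d1: "d \<ge> 1"
  shows "Bn d g * p v0 \<le> (\<Sum>i<n. p i)"
proof -
  have fE: "finite E" using E finite_subset by blast
  obtain t0 where g: "g = 2 * t0" "has_cycle n m E t0" using G unfolding has_girth_def by blast
  have t0: "t0 \<ge> 2" using g(2) unfolding has_cycle_def by simp
  define S where "S = (\<Sum>i<n. p i)"
  define M where "M = p v0"
  define U where "U L = {P. length P < L \<and> nbp E v0 m P}" for L
  have injU: "inj_on (endv v0) (U L)" if L: "4 * (L - 1) < g" for L
  proof (rule inj_onI)
    fix P1 P2 assume P: "P1 \<in> U L" "P2 \<in> U L" "endv v0 P1 = endv v0 P2"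
    show "P1 = P2"
    proof (rule ccontr)
      assume "P1 \<noteq> P2"
      then have "g \<le> 2 * length P1 + 2 * length P2" using path_close[OF E G _ _ _ P(3)] P unfolding U_def by blast
      moreover have "length P1 \<le> L - 1" "length P2 \<le> L - 1" using P unfolding U_def by auto
      ultimately show False using L by linarith
    qed
  qed
  have levA: "(\<Sum>k<L. Fs E p k v0 m) = (\<Sum>i\<in>endv v0 ` U L. p i)" "endv v0 ` U L \<subseteq> {..<n}"
    if L: "4 * (L - 1) < g" for L
    using level_le_S[OF E u injU[OF L, unfolded U_def]] unfolding U_def by auto
  have levS: "(\<Sum>k<L. Fs E p k v0 m) \<le> S" if L: "4 * (L - 1) < g" for L
    unfolding levA(1)[OF L] S_def by (rule sum_mono2) (use levA(2)[OF L] in auto)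
  show ?thesis
  proof (cases "odd t0")
    case True
    then obtain K where K: "t0 = 2 * K + 1" using oddE by blast
    then have K1: "K \<ge> 1" using t0 by simp
    have gd: "odd (g div 2)" using g K by simp
    have g6: "(g - 6) div 4 = K - 1" using g K K1 by simp
    have set_eq: "{0..K - 1} = {..<K}" using K1 by auto
    have B: "Bn d g = 1 + (\<Sum>k<K. d * (d - 1) ^ k)" unfolding Bn_def using gd g6 set_eq by simp
    have "Bn d g * M = M + (\<Sum>k<K. d * (d - 1) ^ k) * M" unfolding B by (simp add: algebra_simps)
    also have "\<dots> \<le> (\<Sum>k<Suc K. Fs E p k v0 m)" unfolding M_def by (rule lower_levels[OF E pc deg u])
    also have "\<dots> \<le> S" using levS[of "Suc K"] g K by simp
    finally show ?thesis unfolding S_def M_def .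
  next
    case False
    then obtain K where K: "t0 = 2 * K" using evenE by blast
    then have K1: "K \<ge> 1" using t0 by simp
    then obtain K' where K': "K = Suc K'" by (cases K) auto
    have gd: "\<not> odd (g div 2)" using g K by simp
    have g4: "(g - 4) div 4 = K'" using g K K' by simp
    have set_eq: "{0..<K'} = {..<K'}" by auto
    have B: "Bn d g = 1 + (\<Sum>k<K'. d * (d - 1) ^ k) + (d - 1) ^ K'" unfolding Bn_def using gd g4 set_eq by simp
    define V where "V = pset E K v0 m"
    define A where "A = endv v0 ` U K"
    define W where "W = endv v0 ` V"
    have LK: "4 * (K - 1) < g" using g K K1 by simp
    have finV: "finite V" unfolding V_def using finite_pset[OF fE] .
    have finW: "finite W" unfolding W_def using finV by simp
    have Wn: "W \<subseteq> {..<n}" unfolding W_def V_def pset_def using nbp_end[OF E u] by auto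
    have An: "A \<subseteq> {..<n}" unfolding A_def using levA(2)[OF LK] .
    have finA: "finite A" using An finite_subset by blast
    have disj: "A \<inter> W = {}"
    proof (rule ccontr)
      assume "A \<inter> W \<noteq> {}"
      then obtain P1 P2 where P: "P1 \<in> U K" "P2 \<in> V" "endv v0 P1 = endv v0 P2"
        unfolding A_def W_def by blast
      then have "length P1 < K" "length P2 = K" unfolding U_def V_def pset_def by auto
      then have "P1 \<noteq> P2" by auto
      then have "g \<le> 2 * length P1 + 2 * length P2"
        using path_close[OF E G _ _ _ P(3)] P unfolding U_def V_def pset_def by blast
      then show False using \<open>length P1 < K\<close> \<open>length P2 = K\<close> g K by linarith
    qed
    define \<phi> where "\<phi> P = (endv v0 P, fst (last P))" for P
    define T where "T = (SIGMA w:W. {c. (w, c) \<in> E})"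
    have finT: "finite T" unfolding T_def using finW
    proof (intro finite_SigmaI)
      fix w show "finite {c. (w, c) \<in> E}"
      proof -
        have "{c. (w, c) \<in> E} \<subseteq> snd ` E" by force
        then show ?thesis using fE finite_subset by blast
      qed
    qed simp
    have Vne: "P \<noteq> []" if "P \<in> V" for P using that K1 unfolding V_def pset_def by auto
    have injphi: "inj_on \<phi> V"
    proof (rule inj_onI)
      fix P1 P2 assume P: "P1 \<in> V" "P2 \<in> V" "\<phi> P1 = \<phi> P2"
      have "last P1 = last P2"
        using P Vne[OF P(1)] Vne[OF P(2)] endv_last[of P1 v0] endv_last[of P2 v0] unfolding \<phi>_def
        by (simp add: prod_eq_iff)
      show "P1 = P2"
      proof (rule ccontr)
        assume "P1 \<noteq> P2"
        then have "g \<le> 4 * length P1 - 2"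
          using path_close2[OF E G _ _ _ _ \<open>last P1 = last P2\<close> Vne[OF P(1)]] P
          unfolding V_def pset_def by auto
        moreover have "length P1 = K" using P unfolding V_def pset_def by auto
        ultimately show False using g K K1 by linarith
      qed
    qed
    have phiT: "\<phi> ` V \<subseteq> T"
    proof
      fix x assume "x \<in> \<phi> ` V"
      then obtain P where P: "P \<in> V" "x = \<phi> P" by blast
      have "last P \<in> set P" using Vne[OF P(1)] by simp
      moreover have "set P \<subseteq> {(c, w). (w, c) \<in> E}" using P(1) nbp_set unfolding V_def pset_def by blast
      ultimately have "last P \<in> {(c, w). (w, c) \<in> E}" by (rule subsetD[rotated])
      then have "(snd (last P), fst (last P)) \<in> E" by (simp add: case_prod_beta)
      then have e: "(endv v0 P, fst (last P)) \<in> E" using endv_last[OF Vne[OF P(1)], of v0] by simp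
      have xe: "x = (endv v0 P, fst (last P))" using P(2) unfolding \<phi>_def by simp
      have "endv v0 P \<in> W" unfolding W_def using P(1) by (rule imageI)
      then show "x \<in> T" unfolding T_def xe using e by simp
    qed
    have h2: "Fs E p K v0 m \<le> d * (\<Sum>w\<in>W. p w)"
    proof -
      have "Fs E p K v0 m = (\<Sum>P\<in>V. p (fst (\<phi> P)))" unfolding Fs_def V_def \<phi>_def by simp
      also have "\<dots> = (\<Sum>x\<in>\<phi> ` V. p (fst x))" using sum.reindex[OF injphi, of "\<lambda>x. p (fst x)"] by simp
      also have "\<dots> \<le> (\<Sum>x\<in>T. p (fst x))" by (rule sum_mono2[OF finT phiT]) simp
      also have "\<dots> = (\<Sum>w\<in>W. \<Sum>c\<in>{c. (w, c) \<in> E}. p w)"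
      proof -
        have fN: "\<forall>w\<in>W. finite {c. (w, c) \<in> E}"
        proof
          fix w
          have "{c. (w, c) \<in> E} \<subseteq> snd ` E" by force
          then show "finite {c. (w, c) \<in> E}" using fE finite_subset by blast
        qed
        have "(\<Sum>x\<in>T. p (fst x)) = (\<Sum>x\<in>T. (\<lambda>(w, c). p w) x)"
          by (intro sum.cong) (auto simp: case_prod_beta)
        also have "\<dots> = (\<Sum>w\<in>W. \<Sum>c\<in>{c. (w, c) \<in> E}. p w)"
          unfolding T_def by (rule sum.Sigma[OF finW fN, symmetric])
        finally show ?thesis .
      qed
      also have "\<dots> = (\<Sum>w\<in>W. d * p w)"
      proof (rule sum.cong)
        fix w assume "w \<in> W"
        then have "card {c. (w, c) \<in> E} = d" using deg Wn unfolding vdeg_def by auto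
        then show "(\<Sum>c\<in>{c. (w, c) \<in> E}. p w) = d * p w" by simp
      qed simp
      finally show ?thesis by (simp add: sum_distrib_left)
    qed
    have h1: "(\<Sum>k<K. Fs E p k v0 m) = (\<Sum>i\<in>A. p i)" unfolding A_def using levA(1)[OF LK] .
    have h3: "(\<Sum>i\<in>A. p i) + (\<Sum>i\<in>W. p i) \<le> S"
    proof -
      have "(\<Sum>i\<in>A. p i) + (\<Sum>i\<in>W. p i) = (\<Sum>i\<in>A \<union> W. p i)"
        by (rule sum.union_disjoint[OF finA finW disj, symmetric])
      also have "\<dots> \<le> S" unfolding S_def by (rule sum_mono2) (use An Wn in auto)
      finally show ?thesis .
    qed
    have low: "M + (\<Sum>k<K'. d * (d - 1) ^ k) * M \<le> (\<Sum>k<K. Fs E p k v0 m)"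
      unfolding K' M_def by (rule lower_levels[OF E pc deg u])
    have root: "d * ((d - 1) ^ K' * M) \<le> Fs E p K v0 m"
      unfolding K' M_def by (rule Fs_root[OF E pc deg u])
    have "d * (Bn d g * M) = d * (M + (\<Sum>k<K'. d * (d - 1) ^ k) * M) + d * ((d - 1) ^ K' * M)"
      unfolding B by (simp add: algebra_simps)
    also have "\<dots> \<le> d * (\<Sum>k<K. Fs E p k v0 m) + Fs E p K v0 m"
      using low root by (intro add_mono mult_le_mono2) auto
    also have "\<dots> \<le> d * (\<Sum>i\<in>A. p i) + d * (\<Sum>w\<in>W. p w)" using h1 h2 by simp
    also have "\<dots> = d * ((\<Sum>i\<in>A. p i) + (\<Sum>w\<in>W. p w))" by (rule add_mult_distrib2[symmetric])
    also have "\<dots> \<le> d * S" using h3 by (rule mult_le_mono2)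
    finally have "d * (Bn d g * M) \<le> d * S" .
    then show ?thesis using d1 unfolding S_def M_def by simp
  qed
qed



lemma girth_bound_nat: "d \<ge> 1 \<Longrightarrow> girth_bound d g = real (Bn d g)"
  unfolding girth_bound_def Bn_def by (simp add: of_nat_diff)

lemma top_fin: "finite {(\<Sum>i\<in>I. (p::nat \<Rightarrow> nat) i) | I. I \<subseteq> {..<(n::nat)} \<and> card I = e}"
proof -
  have eq: "{(\<Sum>i\<in>I. p i) | I. I \<subseteq> {..<n} \<and> card I = e} = (\<lambda>I. \<Sum>i\<in>I. p i) ` {I. I \<subseteq> {..<n} \<and> card I = e}"
    by blast
  have "{I. I \<subseteq> {..<n} \<and> card I = e} \<subseteq> Pow {..<n}" by blast
  then have "finite {I. I \<subseteq> {..<n} \<and> card I = e}" by (rule finite_subset) simp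
  then show ?thesis unfolding eq by (rule finite_imageI)
qed

lemma ne_of_mem_helper: "x \<in> A \<Longrightarrow> A \<noteq> {}"
  by auto

lemma top_le:
  assumes e: "e \<le> n" and mx: "\<forall>i<n. p i \<le> M"
  shows "top_sum n p e \<le> e * M"
  unfolding top_sum_def
proof (rule Max.boundedI[OF top_fin[where p=p and n=n and e=e]])
  have "card {..<e} = e" by simp
  moreover have "{..<e} \<subseteq> {..<n}" using e by simp
  ultimately have "(\<Sum>i\<in>{..<e}. p i) \<in> {(\<Sum>i\<in>I. p i) | I. I \<subseteq> {..<n} \<and> card I = e}" by blast
  then show "{(\<Sum>i\<in>I. p i) | I. I \<subseteq> {..<n} \<and> card I = e} \<noteq> {}" by (rule ne_of_mem_helper)
next
  fix a assume "a \<in> {(\<Sum>i\<in>I. p i) | I. I \<subseteq> {..<n} \<and> card I = e}"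
  then obtain I where I: "a = (\<Sum>i\<in>I. p i)" "I \<subseteq> {..<n}" "card I = e" by blast
  have pb: "p i \<le> M" if "i \<in> I" for i
  proof -
    have "i < n" using that I(2) by (simp add: subset_iff)
    then show ?thesis using mx by simp
  qed
  have "(\<Sum>i\<in>I. p i) \<le> (\<Sum>i\<in>I. M)" using pb by (rule sum_mono)
  also have "\<dots> = card I * M" by simp
  finally show "a \<le> e * M" using I by simp
qed

lemma top_n: "(\<Sum>i<n. p i) \<le> top_sum n p n"
  unfolding top_sum_def
proof (rule Max_ge[OF top_fin[where p=p and n=n and e=n]])
  have "{..<n} \<subseteq> {..<n} \<and> card {..<n} = n" by simp
  then show "(\<Sum>i<n. p i) \<in> {(\<Sum>i\<in>I. p i) | I. I \<subseteq> {..<n} \<and> card I = n}" by blast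
qed

theorem theorem1:
  fixes n m d dc g :: nat and E :: "(nat \<times> nat) set"
  assumes "tanner_graph n m E"
    and "\<forall>i<n. vdeg E i = d"
    and "\<forall>j<m. cdeg E j = dc"
    and "has_girth n m E g"
  shows "\<forall>p. pseudocodeword n m E p \<and> (\<exists>i<n. p i \<noteq> 0) \<longrightarrow>
           w_bsc n p \<ge> girth_bound d g \<and> w_awgn n p \<ge> girth_bound d g"
proof (intro allI impI)
  fix p assume H: "pseudocodeword n m E p \<and> (\<exists>i<n. p i \<noteq> 0)"
  then have pc: "pseudocodeword n m E p" by blast
  obtain i0 where i0: "i0 < n" "p i0 \<noteq> 0" using H by blast
  have E: "E \<subseteq> {..<n} \<times> {..<m}" using assms(1) unfolding tanner_graph_def .
  have deg: "\<forall>i<n. vdeg E i = d" by (rule assms(2))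
  have G: "has_girth n m E g" by (rule assms(4))
  obtain t0 where "has_cycle n m E t0" using G unfolding has_girth_def by blast
  then obtain vs cs :: "nat \<Rightarrow> nat" where "t0 \<ge> 2" "\<forall>k<t0. vs k < n \<and> cs k < m \<and> (vs k, cs k) \<in> E"
    unfolding has_cycle_def by blast
  then have v: "vs 0 < n" "(vs 0, cs 0) \<in> E" by auto
  have d1: "d \<ge> 1"
  proof -
    have fin: "finite {j. (vs 0, j) \<in> E}"
    proof -
      have "{j. (vs 0, j) \<in> E} \<subseteq> {..<m}" using E by auto
      then show ?thesis by (rule finite_subset[OF _ finite_lessThan])
    qed
    have "cs 0 \<in> {j. (vs 0, j) \<in> E}" using v by simp
    then have "card {j. (vs 0, j) \<in> E} \<noteq> 0" using fin by auto
    then show ?thesis using deg v unfolding vdeg_def by auto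
  qed
  define M where "M = Max (p ` {..<n})"
  have nne: "p ` {..<n} \<noteq> {}" using i0 by auto
  obtain v0 where v0: "v0 < n" "p v0 = M" using Max_in[OF _ nne] unfolding M_def by auto
  have maxp: "\<forall>i<n. p i \<le> M" unfolding M_def by (auto intro: Max_ge)
  have "p i0 \<le> M" using maxp i0(1) by blast
  then have Mpos: "M > 0" using i0(2) by linarith
  define S where "S = (\<Sum>i<n. p i)"
  define B where "B = Bn d g"
  have kb: "B * M \<le> S" using key_bound[OF E G pc deg v0(1) d1] v0(2) unfolding B_def S_def by simp
  have gb: "girth_bound d g = real B" unfolding B_def using girth_bound_nat[OF d1] .
  have awgn: "girth_bound d g \<le> w_awgn n p"
  proof -
    define Q where "Q = (\<Sum>i<n. (p i)^2)"
    have "Q \<le> (\<Sum>i<n. M * p i)" unfolding Q_def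
    proof (rule sum_mono)
      fix i assume "i \<in> {..<n}"
      then have "p i \<le> M" using maxp by auto
      then have "p i * p i \<le> M * p i" by (rule mult_le_mono1)
      then show "(p i)^2 \<le> M * p i" by (simp only: power2_eq_square)
    qed
    moreover have "(\<Sum>i<n. M * p i) = M * S" unfolding S_def by (rule sum_distrib_left[symmetric])
    ultimately have QM: "Q \<le> M * S" by simp
    have "(p i0)^2 \<le> Q" unfolding Q_def using i0(1) by (intro member_le_sum) auto
    moreover have "(p i0)^2 > 0" using i0(2) by simp
    ultimately have Qpos: "Q > 0" by (rule less_le_trans[rotated])
    have "B * Q \<le> B * (M * S)" using QM by (rule mult_le_mono2)
    also have "\<dots> = (B * M) * S" by (simp only: mult.assoc)
    also have "\<dots> \<le> S * S" using kb by (rule mult_le_mono1)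
    finally have "B * Q \<le> S * S" .
    then have "real (B * Q) \<le> real (S * S)" by (simp only: of_nat_le_iff)
    then have "real B * real Q \<le> (real S)^2" by (simp only: of_nat_mult power2_eq_square)
    moreover have rQ: "real Q > 0" using Qpos by (simp only: of_nat_0_less_iff)
    ultimately have X: "real B \<le> (real S)^2 / real Q" using pos_le_divide_eq[OF rQ] by blast
    have eqw: "w_awgn n p = (real S)^2 / real Q" unfolding w_awgn_def S_def Q_def by (rule refl)
    show ?thesis unfolding gb eqw by (rule X)
  qed
  have bsc: "girth_bound d g \<le> w_bsc n p"
  proof -
    define e0 where "e0 = (LEAST e. 2 * top_sum n p e \<ge> S)"
    have ex: "2 * top_sum n p n \<ge> S" using top_n[where n=n and p=p] unfolding S_def by simp
    have e0n: "e0 \<le> n" unfolding e0_def using ex by (rule Least_le)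
    have e0S: "2 * top_sum n p e0 \<ge> S" unfolding e0_def using ex by (rule LeastI)
    have te: "top_sum n p e0 \<le> e0 * M" using top_le[OF e0n maxp] .
    have w: "w_bsc n p = (if 2 * top_sum n p e0 = S then real (2 * e0) else real (2 * e0) - 1)"
      unfolding w_bsc_def Let_def e0_def S_def by (rule refl)
    show ?thesis
    proof (cases "2 * top_sum n p e0 = S")
      case True
      have "S \<le> 2 * (e0 * M)" using True te by linarith
      with kb have "B * M \<le> 2 * (e0 * M)" by (rule le_trans)
      then have "B * M \<le> (2 * e0) * M" by (simp only: mult.assoc)
      then have "B \<le> 2 * e0" using mult_le_cancel2[of B M "2 * e0"] Mpos by blast
      then show ?thesis unfolding w gb using True by simp
    next
      case False
      then have "S < 2 * top_sum n p e0" using e0S by simp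
      then have "S < 2 * (e0 * M)" using te by linarith
      with kb have "B * M < 2 * (e0 * M)" by (rule le_less_trans)
      then have "B * M < (2 * e0) * M" by (simp only: mult.assoc)
      then have "B < 2 * e0" using mult_less_cancel2[of B M "2 * e0"] by blast
      then have "real B \<le> real (2 * e0) - 1" by linarith
      then show ?thesis unfolding w gb using False by simp
    qed
  qed
  show "w_bsc n p \<ge> girth_bound d g \<and> w_awgn n p \<ge> girth_bound d g" using bsc awgn by simp
qed


end
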